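(* Consider a tree power network $(\mathcal{V},\mathcal{E})$, $\mathcal{V}=\{1,\dots,n\}$, with fixed voltage magnitudes $|V_i|=\overline{V}_i>0$, angle limits $\underline{\theta}_{ik}\in[-\pi,0]$, $\overline{\theta}_{ik}\in[0,\pi]$ on each line, and bus power bounds $\underline{P}_i\le P_i\le\overline{P}_i$. Let $\mathcal{P}=\mathcal{P}_\theta\cap\mathcal{P}_P$, suppose $\mathcal{P}\neq\emptyset$, and assume $$-\tan^{-1}\!\Big(\frac{b_{ik}}{g_{ik}}\Big)<\underline{\theta}_{ik}\le\overline{\theta}_{ik}<\tan^{-1}\!\Big(\frac{b_{ik}}{g_{ik}}\Big)\quad\text{for all }(i,k)\in\mathcal{E}.$$ Then $\mathcal{O}(\mathcal{P})=\mathcal{O}(\mathrm{conv}(\mathcal{P}_\theta)\cap\mathcal{P}_P)$.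
   Context: Each line $(i,k)\in\mathcal{E}$ has admittance $y_{ik}=g_{ik}-jb_{ik}$ with $g_{ik},b_{ik}\ge0$. For $\theta_{ik}=\theta_i-\theta_k$ (difference of bus voltage phases), the line flows are $P_{ik}=\overline{V}_i^2 g_{ik}+\overline{V}_i\overline{V}_k b_{ik}\sin\theta_{ik}-\overline{V}_i\overline{V}_k g_{ik}\cos\theta_{ik}$ and $P_{ki}=\overline{V}_k^2 g_{ik}-\overline{V}_i\overline{V}_k b_{ik}\sin\theta_{ik}-\overline{V}_i\overline{V}_k g_{ik}\cos\theta_{ik}$. The angle-constrained flow region of line $(i,k)$, $\mathcal{F}_{\theta_{ik}}\subset\mathbb{R}^2$, is the set of $(P_{ik},P_{ki})$ as $\theta_{ik}$ ranges over $[\underline{\theta}_{ik},\overline{\theta}_{ik}]$; $\mathcal{F}_\theta=\prod_{(i,k)\in\mathcal{E}}\mathcal{F}_{\theta_{ik}}$. $\mathbf{A}$ is the $n\times2|\mathcal{E}|$ matrix with $A(i,(k,l))=1$ if $i=k$ and $0$ otherwise, so $(\mathbf{A}\mathbf{f})_i=\sum_{k\sim i}P_{ik}$. $\mathcal{P}_\theta=\mathbf{A}\mathcal{F}_\theta$ and $\mathcal{P}_P=\{\mathbf{p}\in\mathbb{R}^n:\underline{P}_i\le P_i\le\overline{P}_i\ \forall i\}$. For $\mathcal{A}\subseteq\mathbb{R}^m$, $\mathcal{O}(\mathcal{A})$ is the set of Pareto-optimal points (no $y\in\mathcal{A}$ with $y\le x$ componentwise, strict in some coordinate); $\mathrm{conv}$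 denotes convex hull. *)

theory Defs
  imports "HOL-Analysis.Analysis"
begin

text \<open>Power network on a finite bus type 'v (buses 1..n, n = CARD('v)).
  E is a set of lines, each line stored once as an ordered pair (i,k).\<close>

definition adj :: "('v \<times> 'v) set \<Rightarrow> 'v \<Rightarrow> 'v \<Rightarrow> bool" where
  "adj E i k \<longleftrightarrow> (i, k) \<in> E \<or> (k, i) \<in> E"

definition is_tree :: "('v::finite \<times> 'v) set \<Rightarrow> bool" where
  "is_tree E \<longleftrightarrow>
     (\<forall>i. (i, i) \<notin> E) \<and>
     (\<forall>i k. (i, k) \<in> E \<longrightarrow> (k, i) \<notin> E) \<and>
     (\<forall>i k. (adj E)\<^sup>*\<^sup>* i k) \<and>
     card E = CARD('v) - 1"

definition flow_ik :: "('v \<Rightarrow> real) \<Rightarrow> real \<Rightarrow> real \<Rightarrow> 'v \<Rightarrow> 'v \<Rightarrow> real \<Rightarrow> real" where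
  "flow_ik V g b i k t = (V i)\<^sup>2 * g + V i * V k * b * sin t - V i * V k * g * cos t"

definition flow_ki :: "('v \<Rightarrow> real) \<Rightarrow> real \<Rightarrow> real \<Rightarrow> 'v \<Rightarrow> 'v \<Rightarrow> real \<Rightarrow> real" where
  "flow_ki V g b i k t = (V k)\<^sup>2 * g - V i * V k * b * sin t - V i * V k * g * cos t"

text \<open>F_theta: product over lines of the angle-constrained flow regions; a flow vector
  is a function on directed line ends (i,k), (k,i), zero elsewhere.\<close>
definition F_theta ::
  "('v \<times> 'v) set \<Rightarrow> ('v \<Rightarrow> real) \<Rightarrow> ('v \<times> 'v \<Rightarrow> real) \<Rightarrow> ('v \<times> 'v \<Rightarrow> real)
   \<Rightarrow> ('v \<times> 'v \<Rightarrow> real) \<Rightarrow> ('v \<times> 'v \<Rightarrow> real) \<Rightarrow> ('v \<times> 'v \<Rightarrow> real) set" where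
  "F_theta E V g b thlo thhi =
     {f. (\<forall>(i, k) \<in> E. \<exists>t \<in> {thlo (i, k) .. thhi (i, k)}.
            f (i, k) = flow_ik V (g (i, k)) (b (i, k)) i k t \<and>
            f (k, i) = flow_ki V (g (i, k)) (b (i, k)) i k t) \<and>
         (\<forall>i k. \<not> adj E i k \<longrightarrow> f (i, k) = 0)}"

definition A_map :: "('v::finite \<times> 'v) set \<Rightarrow> ('v \<times> 'v \<Rightarrow> real) \<Rightarrow> real ^ 'v" where
  "A_map E f = (\<chi> i. \<Sum>k\<in>{k. adj E i k}. f (i, k))"

definition P_theta where
  "P_theta E V g b thlo thhi = A_map E ` F_theta E V g b thlo thhi"

definition P_P :: "('v::finite \<Rightarrow> real) \<Rightarrow> ('v \<Rightarrow> real) \<Rightarrow> (real ^ 'v) set" where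
  "P_P Plo Phi = {p. \<forall>i. Plo i \<le> p $ i \<and> p $ i \<le> Phi i}"

definition pareto :: "(real ^ 'v) set \<Rightarrow> (real ^ 'v) set" where
  "pareto S = {x \<in> S. \<not> (\<exists>y \<in> S. (\<forall>i. y $ i \<le> x $ i) \<and> (\<exists>i. y $ i < x $ i))}"

text \<open>tan^{-1}(b/g), with the convention tan^{-1}(b/0) = pi/2 (lossless line, b > 0).\<close>
definition angle_bound :: "real \<Rightarrow> real \<Rightarrow> real" where
  "angle_bound g b = (if g = 0 then pi / 2 else arctan (b / g))"

end

theory Submission
  imports Defs
begin


lemma between_psi:
  fixes \<phi> \<psi> :: "real \<Rightarrow> real"
  assumes cont: "continuous_on UNIV \<psi>"
    and mono: "\<forall>s t. a \<le> s \<longrightarrow> s \<le> t \<longrightarrow> t \<le> b \<longrightarrow> \<phi> s \<le> \<phi> t \<and> \<psi> t \<le> \<psi> s"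
    and s1: "a \<le> s1" "s1 \<le> b" "L \<le> \<phi> s1" "\<phi> s1 \<le> U"
    and s2: "a \<le> s2" "s2 \<le> b" "L \<le> \<phi> s2" "\<phi> s2 \<le> U"
    and c: "\<psi> s1 \<le> c" "c \<le> \<psi> s2"
  shows "\<exists>t. a \<le> t \<and> t \<le> b \<and> L \<le> \<phi> t \<and> \<phi> t \<le> U \<and> \<psi> t = c"
proof (cases "s2 \<le> s1")
  case True
  have "continuous_on {s2..s1} \<psi>" using cont continuous_on_subset by blast
  then obtain t where t: "s2 \<le> t" "t \<le> s1" "\<psi> t = c"
    using IVT2'[of \<psi> s1 c s2] c True by auto
  have "\<phi> s2 \<le> \<phi> t" "\<phi> t \<le> \<phi> s1" using mono t s1 s2 by auto
  then show ?thesis using t s1 s2 by (intro exI[of _ t]) auto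
next
  case False
  then have "\<psi> s2 \<le> \<psi> s1" using mono s1 s2 by auto
  then have "\<psi> s1 = c" using c by auto
  then show ?thesis using s1 by blast
qed

lemma L1:
  fixes \<phi> \<psi> :: "real \<Rightarrow> real"
  assumes cont: "continuous_on UNIV \<phi>" "continuous_on UNIV \<psi>"
    and mono: "\<forall>s t. a \<le> s \<longrightarrow> s \<le> t \<longrightarrow> t \<le> b \<longrightarrow> \<phi> s \<le> \<phi> t \<and> \<psi> t \<le> \<psi> s"
    and th: "a \<le> th" "th \<le> b" "L \<le> \<phi> th"
    and tx: "a \<le> tx" "tx \<le> b" "\<phi> tx \<le> U"
    and LU: "L \<le> U"
  shows "\<exists>ta tb. a \<le> ta \<and> ta \<le> b \<and> a \<le> tb \<and> tb \<le> b \<and> L \<le> \<phi> ta \<and> \<phi> ta \<le> U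
     \<and> L \<le> \<phi> tb \<and> \<phi> tb \<le> U \<and> \<psi> th \<le> \<psi> ta \<and> \<psi> tb \<le> \<psi> tx \<and> \<psi> tb \<le> \<psi> ta
     \<and> (\<forall>c. \<psi> tb \<le> c \<and> c \<le> \<psi> ta \<longrightarrow>
            (\<exists>t. a \<le> t \<and> t \<le> b \<and> L \<le> \<phi> t \<and> \<phi> t \<le> U \<and> \<psi> t = c))"
proof -
  have ivt: "\<exists>t. tx \<le> t \<and> t \<le> th \<and> \<phi> t = L" if "\<phi> tx \<le> L" "tx \<le> th"
  proof -
    have "continuous_on {tx..th} \<phi>" using cont continuous_on_subset by blast
    then show ?thesis using IVT'[of \<phi> tx L th] that th by auto
  qed
  obtain ta where ta: "a \<le> ta" "ta \<le> th" "L \<le> \<phi> ta" "\<phi> ta \<le> U"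
  proof (cases "\<phi> th \<le> U")
    case True then show ?thesis using that th by auto
  next
    case False
    then have "tx < th" using mono th tx by (metis linorder_not_le order_le_less_trans)
    show ?thesis
    proof (cases "L \<le> \<phi> tx")
      case True then show ?thesis using that tx \<open>tx < th\<close> by auto
    next
      case False
      then obtain t where "tx \<le> t" "t \<le> th" "\<phi> t = L" using ivt \<open>tx < th\<close> by force
      then show ?thesis using that[of t] tx LU by auto
    qed
  qed
  obtain tb where tb: "tx \<le> tb" "tb \<le> b" "L \<le> \<phi> tb" "\<phi> tb \<le> U"
  proof (cases "L \<le> \<phi> tx")
    case True then show ?thesis using that tx by auto
  next
    case False
    then have "tx < th" using mono th tx by (metis linorder_not_le order_le_less_trans)
    show ?thesis
    proof (cases "\<phi> th \<le> U")
      case True then show ?thesis using that[of th] th \<open>tx < th\<close> by auto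
    next
      case False
      then obtain t where "tx \<le> t" "t \<le> th" "\<phi> t = L" using ivt \<open>tx < th\<close> \<open>\<not> L \<le> \<phi> tx\<close> by force
      then show ?thesis using that[of t] th LU by auto
    qed
  qed
  have p1: "\<psi> th \<le> \<psi> ta" using mono ta th by auto
  have p2: "\<psi> tb \<le> \<psi> tx" using mono tb tx by auto
  define ta' where "ta' = (if \<psi> tb \<le> \<psi> ta then ta else tb)"
  have ta': "a \<le> ta'" "ta' \<le> b" "L \<le> \<phi> ta'" "\<phi> ta' \<le> U" "\<psi> th \<le> \<psi> ta'" "\<psi> tb \<le> \<psi> ta'"
    using ta tb th tx p1 unfolding ta'_def by auto
  show ?thesis
    apply (rule exI[of _ ta'], rule exI[of _ tb])
    using ta' tb tx p2 between_psi[OF cont(2) mono, of tb L U ta'] by auto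
qed

lemma L1r:
  fixes \<phi> \<psi> :: "real \<Rightarrow> real"
  assumes cont: "continuous_on UNIV \<phi>" "continuous_on UNIV \<psi>"
    and mono: "\<forall>s t. a \<le> s \<longrightarrow> s \<le> t \<longrightarrow> t \<le> b \<longrightarrow> \<phi> t \<le> \<phi> s \<and> \<psi> s \<le> \<psi> t"
    and th: "a \<le> th" "th \<le> b" "L \<le> \<phi> th"
    and tx: "a \<le> tx" "tx \<le> b" "\<phi> tx \<le> U"
    and LU: "L \<le> U"
  shows "\<exists>ta tb. a \<le> ta \<and> ta \<le> b \<and> a \<le> tb \<and> tb \<le> b \<and> L \<le> \<phi> ta \<and> \<phi> ta \<le> U
     \<and> L \<le> \<phi> tb \<and> \<phi> tb \<le> U \<and> \<psi> th \<le> \<psi> ta \<and> \<psi> tb \<le> \<psi> tx \<and> \<psi> tb \<le> \<psi> ta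
     \<and> (\<forall>c. \<psi> tb \<le> c \<and> c \<le> \<psi> ta \<longrightarrow>
            (\<exists>t. a \<le> t \<and> t \<le> b \<and> L \<le> \<phi> t \<and> \<phi> t \<le> U \<and> \<psi> t = c))"
proof -
  have c1: "continuous_on UNIV (\<lambda>s. \<phi> (- s))" "continuous_on UNIV (\<lambda>s. \<psi> (- s))"
    using cont by (auto intro!: continuous_on_compose2[where g=\<phi> and f=uminus, OF cont(1)]
        continuous_on_compose2[where g=\<psi> and f=uminus, OF cont(2)] continuous_intros)
  have m1: "\<forall>s t. -b \<le> s \<longrightarrow> s \<le> t \<longrightarrow> t \<le> -a \<longrightarrow> \<phi> (-s) \<le> \<phi> (-t) \<and> \<psi> (-t) \<le> \<psi> (-s)"
    using mono by (metis minus_le_iff neg_le_iff_le)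
  obtain ta tb where r: "-b \<le> ta \<and> ta \<le> -a \<and> -b \<le> tb \<and> tb \<le> -a \<and> L \<le> \<phi> (-ta) \<and> \<phi> (-ta) \<le> U
     \<and> L \<le> \<phi> (-tb) \<and> \<phi> (-tb) \<le> U \<and> \<psi> (- (-th)) \<le> \<psi> (-ta) \<and> \<psi> (-tb) \<le> \<psi> (-(-tx)) \<and> \<psi> (-tb) \<le> \<psi> (-ta)
     \<and> (\<forall>c. \<psi> (-tb) \<le> c \<and> c \<le> \<psi> (-ta) \<longrightarrow>
            (\<exists>t. -b \<le> t \<and> t \<le> -a \<and> L \<le> \<phi> (-t) \<and> \<phi> (-t) \<le> U \<and> \<psi> (-t) = c))"
    using L1[OF c1 m1, of "-th" L "-tx" U] th tx LU by auto
  show ?thesis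
  proof (rule exI[of _ "-ta"], rule exI[of _ "-tb"], intro conjI allI impI)
    fix c assume "\<psi> (- tb) \<le> c \<and> c \<le> \<psi> (- ta)"
    then obtain t where "-b \<le> t \<and> t \<le> -a \<and> L \<le> \<phi> (-t) \<and> \<phi> (-t) \<le> U \<and> \<psi> (-t) = c"
      using r by blast
    then show "\<exists>t. a \<le> t \<and> t \<le> b \<and> L \<le> \<phi> t \<and> \<phi> t \<le> U \<and> \<psi> t = c"
      by (intro exI[of _ "-t"]) auto
  qed (use r in auto)
qed



definition contrib :: "('v \<times> 'v \<Rightarrow> real \<Rightarrow> real) \<Rightarrow> ('v \<times> 'v \<Rightarrow> real \<Rightarrow> real) \<Rightarrow> 'v \<times> 'v \<Rightarrow> real \<Rightarrow> 'v \<Rightarrow> real" where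
  "contrib u w e s v = (if fst e = v then u e s else 0) + (if snd e = v then w e s else 0)"

definition Ysum :: "('v \<times> 'v \<Rightarrow> real \<Rightarrow> real) \<Rightarrow> ('v \<times> 'v \<Rightarrow> real \<Rightarrow> real) \<Rightarrow> ('v \<times> 'v) set \<Rightarrow> ('v \<times> 'v \<Rightarrow> real) \<Rightarrow> 'v \<Rightarrow> real" where
  "Ysum u w E t v = (\<Sum>e\<in>E. contrib u w e (t e) v)"

lemma sum_card_fst:
  fixes E :: "('v \<times> 'v) set"
  assumes "finite S" "finite E" "\<forall>e\<in>E. f e \<in> S"
  shows "(\<Sum>v\<in>S. card {e\<in>E. f e = v}) = card E"
proof -
  have "E = (\<Union>v\<in>S. {e\<in>E. f e = v})" using assms by auto
  moreover have "card (\<Union>v\<in>S. {e\<in>E. f e = v}) = (\<Sum>v\<in>S. card {e\<in>E. f e = v})"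
    by (rule card_UN_disjoint) (use assms in auto)
  ultimately show ?thesis by simp
qed

lemma leaf_exists:
  fixes E :: "('v::finite \<times> 'v) set"
  assumes ends: "\<forall>e\<in>E. fst e \<in> S \<and> snd e \<in> S \<and> fst e \<noteq> snd e"
    and conn: "\<forall>i\<in>S. \<forall>k\<in>S. (adj E)\<^sup>*\<^sup>* i k"
    and card: "card E + 1 = card S"
    and ne: "E \<noteq> {}"
  shows "\<exists>l\<in>S. \<exists>e\<in>E. (fst e = l \<or> snd e = l) \<and> (\<forall>e'\<in>E. (fst e' = l \<or> snd e' = l) \<longrightarrow> e' = e)"
proof (rule ccontr)
  assume nl: "\<not> ?thesis"
  have fin: "finite S" "finite E" by auto
  define T where "T v = {e\<in>E. fst e = v \<or> snd e = v}" for v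
  have "card E > 0" using ne fin by (simp add: card_gt_0_iff)
  then have cS: "card S \<ge> 2" using card by linarith
  have T2: "card (T v) \<ge> 2" if v: "v \<in> S" for v
  proof -
    obtain w where w: "w \<in> S" "w \<noteq> v"
    proof -
      have "\<not> S \<subseteq> {v}"
      proof
        assume "S \<subseteq> {v}"
        then have "card S \<le> card {v}" by (intro card_mono) auto
        then show False using cS by simp
      qed
      then show ?thesis using that by blast
    qed
    have "(adj E)\<^sup>*\<^sup>* v w" using conn v w by auto
    then obtain y where "adj E v y" using w(2) by (metis converse_rtranclpE)
    then obtain e where e: "e \<in> T v" unfolding adj_def T_def by force
    have "\<not> card (T v) \<le> 1"
    proof
      assume "card (T v) \<le> 1"
      moreover have "finite (T v)" unfolding T_def using fin by auto
      ultimately have "card (T v) = 1" using e by (metis card_0_eq empty_iff le_antisym less_one not_le)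
      then obtain x where "T v = {x}" by (metis card_1_singletonE)
      then have "T v = {e}" using e by auto
      then show False using nl v unfolding T_def by blast
    qed
    then show ?thesis by simp
  qed
  have "card (T v) \<le> card {e\<in>E. fst e = v} + card {e\<in>E. snd e = v}" for v
  proof -
    have "T v = {e\<in>E. fst e = v} \<union> {e\<in>E. snd e = v}" unfolding T_def by auto
    then show ?thesis by (metis card_Un_le)
  qed
  then have "(\<Sum>v\<in>S. card (T v)) \<le> (\<Sum>v\<in>S. card {e\<in>E. fst e = v}) + (\<Sum>v\<in>S. card {e\<in>E. snd e = v})"
    by (simp add: sum.distrib[symmetric] sum_mono)
  also have "\<dots> = 2 * card E" using sum_card_fst[of S E fst] sum_card_fst[of S E snd] ends fin by auto
  finally have "(\<Sum>v\<in>S. card (T v)) \<le> 2 * card E" .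
  moreover have "(\<Sum>v\<in>S. card (T v)) \<ge> (\<Sum>v\<in>S. 2)" using T2 by (meson sum_mono)
  ultimately show False using card by simp
qed

lemma conn_remove:
  fixes E :: "('v \<times> 'v) set"
  assumes e: "e \<in> E" and lp: "(fst e = l \<and> snd e = p) \<or> (snd e = l \<and> fst e = p)"
    and uniq: "\<forall>e'\<in>E. (fst e' = l \<or> snd e' = l) \<longrightarrow> e' = e" and lpne: "l \<noteq> p"
  shows "(adj E)\<^sup>*\<^sup>* x y \<Longrightarrow> x \<noteq> l \<Longrightarrow> (adj (E - {e}))\<^sup>*\<^sup>* x (if y = l then p else y)"
proof (induction rule: rtranclp_induct)
  case base
  then show ?case by simp
next
  case (step y z)
  then have IH: "(adj (E - {e}))\<^sup>*\<^sup>* x (if y = l then p else y)" by simp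
  from step(2) obtain e' where e': "e' \<in> E" "e' = (y, z) \<or> e' = (z, y)" unfolding adj_def by auto
  show ?case
  proof (cases "e' = e")
    case True
    then show ?thesis using IH lp e' lpne by auto
  next
    case False
    then have "y \<noteq> l" "z \<noteq> l" using uniq e' by auto
    moreover have "adj (E - {e}) y z" using e' False unfolding adj_def by auto
    ultimately show ?thesis using IH by (simp add: rtranclp.rtrancl_into_rtrancl)
  qed
qed



lemma Ysum_remove:
  fixes E :: "('v::finite \<times> 'v) set"
  assumes "e \<in> E"
  shows "Ysum u w E t v = Ysum u w (E - {e}) t v + contrib u w e (t e) v"
  unfolding Ysum_def using assms by (simp add: sum.remove add.commute)

lemma Ysum_cong:
  assumes "\<forall>e\<in>E. t e = t' e"
  shows "Ysum u w E t v = Ysum u w E t' v"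
  unfolding Ysum_def using assms by (auto intro: sum.cong)

lemma Ysum_zero:
  assumes "\<forall>e\<in>E. fst e \<noteq> v \<and> snd e \<noteq> v"
  shows "Ysum u w E t v = 0"
  unfolding Ysum_def contrib_def using assms by (auto intro: sum.neutral)

lemma GL:
  fixes E :: "('v::finite \<times> 'v) set"
  shows "\<lbrakk>\<forall>e\<in>E. fst e \<in> S \<and> snd e \<in> S \<and> fst e \<noteq> snd e;
   \<forall>i\<in>S. \<forall>k\<in>S. (adj E)\<^sup>*\<^sup>* i k;
   card E + 1 = card S;
   \<forall>e\<in>E. continuous_on UNIV (u e) \<and> continuous_on UNIV (w e);
   \<forall>e\<in>E. \<forall>s t. lo e \<le> s \<longrightarrow> s \<le> t \<longrightarrow> t \<le> hi e \<longrightarrow> u e s \<le> u e t \<and> w e t \<le> w e s;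
   \<forall>e\<in>E. lo e \<le> th e \<and> th e \<le> hi e;
   \<forall>e\<in>E. lo e \<le> tx e \<and> tx e \<le> hi e;
   \<forall>v\<in>S. L v \<le> Ysum u w E th v;
   \<forall>v\<in>S. Ysum u w E tx v \<le> U v;
   \<forall>v\<in>S. L v \<le> U v\<rbrakk>
  \<Longrightarrow> \<exists>t. (\<forall>e\<in>E. lo e \<le> t e \<and> t e \<le> hi e) \<and> (\<forall>v\<in>S. L v \<le> Ysum u w E t v \<and> Ysum u w E t v \<le> U v)"
proof (induction "card E" arbitrary: E S L U th tx rule: less_induct)
  case less
  note ends = less.prems(1) and conn = less.prems(2) and card = less.prems(3)
    and cont = less.prems(4) and mono = less.prems(5) and thr = less.prems(6) and txr = less.prems(7)
    and thL = less.prems(8) and txU = less.prems(9) and LU = less.prems(10)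
  have finE: "finite E" by simp
  show ?case
  proof (cases "E = {}")
    case True
    then show ?thesis using thL txU by (intro exI[of _ th]) (auto simp: Ysum_def)
  next
    case False
    obtain l e where l: "l \<in> S" and e: "e \<in> E" and touch: "fst e = l \<or> snd e = l"
      and uniq: "\<forall>e'\<in>E. (fst e' = l \<or> snd e' = l) \<longrightarrow> e' = e"
      using leaf_exists[OF ends conn card False] by blast
    define p where "p = (if fst e = l then snd e else fst e)"
    have lp: "(fst e = l \<and> snd e = p) \<or> (snd e = l \<and> fst e = p)" and lpne: "l \<noteq> p" and pS: "p \<in> S"
      using touch ends e unfolding p_def by auto
    define E' where "E' = E - {e}"
    define S' where "S' = S - {l}"
    have ends': "\<forall>e'\<in>E'. fst e' \<in> S' \<and> snd e' \<in> S' \<and> fst e' \<noteq> snd e'"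
      using ends uniq unfolding E'_def S'_def by auto
    have conn': "\<forall>i\<in>S'. \<forall>k\<in>S'. (adj E')\<^sup>*\<^sup>* i k"
    proof (intro ballI)
      fix i k assume "i \<in> S'" "k \<in> S'"
      then show "(adj E')\<^sup>*\<^sup>* i k" using conn_remove[OF e lp uniq lpne, of i k] conn
        unfolding E'_def S'_def by auto
    qed
    have card': "card E' + 1 = card S'"
      using card e l finE unfolding E'_def S'_def
      by (metis Suc_eq_plus1 card_Diff_singleton card.infinite card_gt_0_iff diff_Suc_1 empty_iff finite_Diff
            One_nat_def add_diff_cancel_right' card_Suc_Diff1 finite.emptyI)
    have lt: "card E' < card E" unfolding E'_def using card_Diff1_less[OF finE e] .
    define \<phi> where "\<phi> s = contrib u w e s l" for s
    define \<psi> where "\<psi> s = contrib u w e s p" for s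
    have noE'l: "\<forall>e'\<in>E'. fst e' \<noteq> l \<and> snd e' \<noteq> l" using uniq unfolding E'_def by auto
    have Yl: "Ysum u w E t l = \<phi> (t e)" for t
      using Ysum_remove[OF e, of u w t l] Ysum_zero[OF noE'l] unfolding \<phi>_def E'_def by simp
    have Yp: "Ysum u w E t p = Ysum u w E' t p + \<psi> (t e)" for t
      using Ysum_remove[OF e, of u w t p] unfolding \<psi>_def E'_def by simp
    have Yo: "Ysum u w E t v = Ysum u w E' t v" if "v \<noteq> l" "v \<noteq> p" for t v
      using Ysum_remove[OF e, of u w t v] that lp unfolding E'_def contrib_def by auto
    have "\<exists>ta tb. lo e \<le> ta \<and> ta \<le> hi e \<and> lo e \<le> tb \<and> tb \<le> hi e \<and> L l \<le> \<phi> ta \<and> \<phi> ta \<le> U l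
     \<and> L l \<le> \<phi> tb \<and> \<phi> tb \<le> U l \<and> \<psi> (th e) \<le> \<psi> ta \<and> \<psi> tb \<le> \<psi> (tx e) \<and> \<psi> tb \<le> \<psi> ta
     \<and> (\<forall>c. \<psi> tb \<le> c \<and> c \<le> \<psi> ta \<longrightarrow>
            (\<exists>t. lo e \<le> t \<and> t \<le> hi e \<and> L l \<le> \<phi> t \<and> \<phi> t \<le> U l \<and> \<psi> t = c))"
    proof -
      have a1: "L l \<le> \<phi> (th e)" "\<phi> (tx e) \<le> U l" "L l \<le> U l"
        using thL txU LU l Yl by auto
      show ?thesis
      proof (cases "fst e = l")
        case True
        then have "\<phi> = u e" "\<psi> = w e" using lp lpne unfolding \<phi>_def \<psi>_def contrib_def by auto
        then show ?thesis using L1[of "u e" "w e" "lo e" "hi e" "th e" "L l" "tx e" "U l"]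
          cont mono e thr txr a1 by auto
      next
        case False
        then have "\<phi> = w e" "\<psi> = u e" using lp lpne unfolding \<phi>_def \<psi>_def contrib_def by auto
        then show ?thesis using L1r[of "w e" "u e" "lo e" "hi e" "th e" "L l" "tx e" "U l"]
          cont mono e thr txr a1 by auto
      qed
    qed
    then obtain ta tb where tab: "lo e \<le> ta" "ta \<le> hi e" "lo e \<le> tb" "tb \<le> hi e"
      "\<psi> (th e) \<le> \<psi> ta" "\<psi> tb \<le> \<psi> (tx e)" "\<psi> tb \<le> \<psi> ta"
      and btw: "\<And>c. \<psi> tb \<le> c \<Longrightarrow> c \<le> \<psi> ta \<Longrightarrow>
            (\<exists>t. lo e \<le> t \<and> t \<le> hi e \<and> L l \<le> \<phi> t \<and> \<phi> t \<le> U l \<and> \<psi> t = c)"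
      by blast
    define L' where "L' = L(p := L p - \<psi> ta)"
    define U' where "U' = U(p := U p - \<psi> tb)"
    have sub: "E' \<subseteq> E" unfolding E'_def by auto
    have thL': "\<forall>v\<in>S'. L' v \<le> Ysum u w E' th v"
    proof
      fix v assume v: "v \<in> S'"
      show "L' v \<le> Ysum u w E' th v"
      proof (cases "v = p")
        case True
        then show ?thesis using thL pS Yp[of th] tab unfolding L'_def by force
      next
        case False
        then show ?thesis using thL v Yo[of v th] unfolding L'_def S'_def by auto
      qed
    qed
    have txU': "\<forall>v\<in>S'. Ysum u w E' tx v \<le> U' v"
    proof
      fix v assume v: "v \<in> S'"
      show "Ysum u w E' tx v \<le> U' v"
      proof (cases "v = p")
        case True
        then show ?thesis using txU pS Yp[of tx] tab unfolding U'_def by force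
      next
        case False
        then show ?thesis using txU v Yo[of v tx] unfolding U'_def S'_def by auto
      qed
    qed
    have LU': "\<forall>v\<in>S'. L' v \<le> U' v" using LU tab unfolding L'_def U'_def S'_def by auto
    obtain t' where t'r: "\<forall>e\<in>E'. lo e \<le> t' e \<and> t' e \<le> hi e"
      and t'b: "\<forall>v\<in>S'. L' v \<le> Ysum u w E' t' v \<and> Ysum u w E' t' v \<le> U' v"
      using less.hyps[OF lt ends' conn' card', where L=L' and U=U' and th=th and tx=tx] cont mono thr txr sub
        thL' txU' LU' by blast
    define c where "c = max (\<psi> tb) (L p - Ysum u w E' t' p)"
    have pS': "p \<in> S'" using pS lpne unfolding S'_def by auto
    have c: "\<psi> tb \<le> c" "c \<le> \<psi> ta" "c \<le> U p - Ysum u w E' t' p" "L p - Ysum u w E' t' p \<le> c"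
      using t'b pS' tab LU pS unfolding c_def L'_def U'_def by auto
    obtain t0 where t0: "lo e \<le> t0" "t0 \<le> hi e" "L l \<le> \<phi> t0" "\<phi> t0 \<le> U l" "\<psi> t0 = c"
      using btw[OF c(1) c(2)] by blast
    define t where "t = t'(e := t0)"
    have tE': "Ysum u w E' t v = Ysum u w E' t' v" for v
      by (rule Ysum_cong) (auto simp: t_def E'_def)
    show ?thesis
    proof (intro exI[of _ t] conjI ballI)
      fix e' assume "e' \<in> E"
      then show "lo e' \<le> t e'" "t e' \<le> hi e'" using t'r t0 unfolding t_def E'_def by auto
    next
      fix v assume v: "v \<in> S"
      have "L v \<le> Ysum u w E t v \<and> Ysum u w E t v \<le> U v"
      proof (cases "v = l")
        case True
        then show ?thesis using Yl[of t] t0 unfolding t_def by simp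
      next
        case vl: False
        show ?thesis
        proof (cases "v = p")
          case True
          then show ?thesis using Yp[of t] tE'[of p] t0 c unfolding t_def by simp
        next
          case False
          have vS': "v \<in> S'" using v vl unfolding S'_def by auto
          then show ?thesis using Yo[of v t] vl tE'[of v] t'b[rule_format, OF vS'] False
            unfolding L'_def U'_def by auto
        qed
      qed
      then show "L v \<le> Ysum u w E t v" "Ysum u w E t v \<le> U v" by auto
    qed
  qed
qed



lemma angle_bound_le: "g \<ge> 0 \<Longrightarrow> angle_bound g b \<le> pi / 2"
  unfolding angle_bound_def using arctan_ubound[of "b/g"] by auto

lemma trig_signs:
  fixes g b x :: real
  assumes gb: "g \<ge> 0" "b \<ge> 0" and x: "- angle_bound g b < x" "x < angle_bound g b"
  shows "cos x > 0 \<and> 0 \<le> b * cos x + g * sin x \<and> g * sin x \<le> b * cos x"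
proof -
  have xb: "- (pi/2) < x" "x < pi/2" using x angle_bound_le[OF gb(1), of b] by auto
  have c: "cos x > 0" using xb by (intro cos_gt_zero_pi) auto
  show ?thesis
  proof (cases "g = 0")
    case True then show ?thesis using c gb by simp
  next
    case False
    then have gp: "g > 0" using gb by simp
    have ab: "angle_bound g b = arctan (b / g)" using False unfolding angle_bound_def by simp
    have "arctan (tan x) < arctan (b / g)" using x(2) ab arctan_tan[OF xb] by simp
    then have t1: "tan x < b / g" by (simp add: arctan_less_iff)
    have "arctan (- (b / g)) < arctan (tan x)" using x(1) ab arctan_tan[OF xb] by (simp add: arctan_minus)
    then have t2: "- (b / g) < tan x" by (simp add: arctan_less_iff)
    have "sin x / cos x < b / g" using t1 by (simp add: tan_def)
    then have s1: "g * sin x < b * cos x" using c gp by (simp add: field_simps)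
    have "- (b / g) < sin x / cos x" using t2 by (simp add: tan_def)
    then have s2: "- (b * cos x) < g * sin x" using c gp by (simp add: field_simps)
    show ?thesis using c s1 s2 by simp
  qed
qed

lemma flow_mono:
  fixes g b lo hi s t :: real
  assumes V: "V i > 0" "V k > 0" and gb: "g \<ge> 0" "b \<ge> 0"
    and r: "- angle_bound g b < lo" "hi < angle_bound g b" "lo \<le> s" "s \<le> t" "t \<le> hi"
  shows "flow_ik V g b i k s \<le> flow_ik V g b i k t \<and> flow_ki V g b i k t \<le> flow_ki V g b i k s"
proof
  have sg: "cos x > 0 \<and> 0 \<le> b * cos x + g * sin x \<and> g * sin x \<le> b * cos x" if "s < x" "x < t" for x
    using trig_signs[OF gb, of x] r that by auto
  have vv: "V i * V k > 0" using V by simp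
  show "flow_ik V g b i k s \<le> flow_ik V g b i k t"
  proof (rule DERIV_nonneg_imp_increasing_open[OF r(4)])
    fix x assume "s < x" "x < t"
    then have "0 \<le> V i * V k * (b * cos x + g * sin x)" using sg vv by simp
    moreover have "((\<lambda>s. flow_ik V g b i k s) has_real_derivative V i * V k * (b * cos x + g * sin x)) (at x)"
      unfolding flow_ik_def by (auto intro!: derivative_eq_intros simp: algebra_simps)
    ultimately show "\<exists>y. ((\<lambda>s. flow_ik V g b i k s) has_real_derivative y) (at x) \<and> 0 \<le> y" by blast
  next
    show "continuous_on {s..t} (\<lambda>s. flow_ik V g b i k s)" unfolding flow_ik_def by (intro continuous_intros)
  qed
  show "flow_ki V g b i k t \<le> flow_ki V g b i k s"
  proof (rule DERIV_nonpos_imp_decreasing_open[OF r(4)])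
    fix x assume "s < x" "x < t"
    then have "V i * V k * (g * sin x - b * cos x) \<le> 0" using sg vv
      by (simp add: mult_nonneg_nonpos)
    moreover have "((\<lambda>s. flow_ki V g b i k s) has_real_derivative V i * V k * (g * sin x - b * cos x)) (at x)"
      unfolding flow_ki_def by (auto intro!: derivative_eq_intros simp: algebra_simps)
    ultimately show "\<exists>y. ((\<lambda>s. flow_ki V g b i k s) has_real_derivative y) (at x) \<and> y \<le> 0" by blast
  next
    show "continuous_on {s..t} (\<lambda>s. flow_ki V g b i k s)" unfolding flow_ki_def by (intro continuous_intros)
  qed
qed

lemma arc_comb:
  fixes lo hi t1 t2 th :: real
  assumes r: "- (pi/2) < lo" "hi < pi/2" "lo \<le> t1" "t1 \<le> hi" "lo \<le> t2" "t2 \<le> hi"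
    and th: "0 \<le> th" "th \<le> 1"
  defines "s \<equiv> th * sin t1 + (1 - th) * sin t2"
  shows "lo \<le> arcsin s \<and> arcsin s \<le> hi \<and> sin (arcsin s) = s
     \<and> th * cos t1 + (1 - th) * cos t2 \<le> cos (arcsin s)"
proof -
  have sl: "sin lo \<le> sin t1" "sin lo \<le> sin t2" "sin t1 \<le> sin hi" "sin t2 \<le> sin hi"
    using r by (auto intro!: sin_monotone_2pi_le)
  have "sin lo = th * sin lo + (1 - th) * sin lo" by (simp add: algebra_simps)
  also have "\<dots> \<le> s" unfolding s_def using sl th
    by (intro add_mono mult_left_mono) auto
  finally have s1: "sin lo \<le> s" .
  have "s \<le> th * sin hi + (1 - th) * sin hi" unfolding s_def using sl th
    by (intro add_mono mult_left_mono) auto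
  also have "\<dots> = sin hi" by (simp add: algebra_simps)
  finally have s2: "s \<le> sin hi" .
  have m1: "-1 \<le> s" using s1 sin_ge_minus_one[of lo] by linarith
  have p1: "s \<le> 1" using s2 sin_le_one[of hi] by linarith
  have "arcsin (sin lo) \<le> arcsin s" using s1 m1 p1 by (intro arcsin_le_arcsin) auto
  moreover have "arcsin (sin lo) = lo" using r by (intro arcsin_sin) auto
  moreover have "arcsin s \<le> arcsin (sin hi)" using s2 m1 p1 by (intro arcsin_le_arcsin) auto
  moreover have "arcsin (sin hi) = hi" using r by (intro arcsin_sin) auto
  moreover have "sin (arcsin s) = s" using m1 p1 by simp
  moreover have "th * cos t1 + (1 - th) * cos t2 \<le> cos (arcsin s)"
  proof -
    have ca: "cos (arcsin s) = sqrt (1 - s\<^sup>2)" using m1 p1 by (rule cos_arcsin)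
    define a where "a = sin t1" define c where "c = cos t1"
    define a' where "a' = sin t2" define c' where "c' = cos t2"
    have e1: "a\<^sup>2 + c\<^sup>2 = 1" "a'\<^sup>2 + c'\<^sup>2 = 1" unfolding a_def c_def a'_def c'_def by simp_all
    have "0 \<le> (a - a')\<^sup>2 + (c - c')\<^sup>2" by simp
    then have cc: "a * a' + c * c' \<le> 1" using e1 by (simp add: power2_eq_square algebra_simps)
    have "(th * c + (1 - th) * c')\<^sup>2 + s\<^sup>2
       = th\<^sup>2 * (a\<^sup>2 + c\<^sup>2) + (1-th)\<^sup>2 * (a'\<^sup>2 + c'\<^sup>2) + 2 * th * (1 - th) * (a * a' + c * c')"
    proof -
      have hs: "s = th * a + (1 - th) * a'" unfolding s_def a_def a'_def by simp
      show ?thesis unfolding hs by (simp add: power2_eq_square algebra_simps)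
    qed
    also have "\<dots> \<le> th\<^sup>2 + (1-th)\<^sup>2 + 2 * th * (1 - th)"
    proof -
      have "2 * th * (1 - th) * (a * a' + c * c') \<le> 2 * th * (1 - th) * 1"
        using cc th by (intro mult_left_mono) auto
      then show ?thesis unfolding e1 by simp
    qed
    also have "\<dots> = 1" by (simp add: power2_eq_square algebra_simps)
    finally have "(th * c + (1 - th) * c')\<^sup>2 \<le> 1 - s\<^sup>2" by simp
    then show ?thesis unfolding ca c_def c'_def by (rule real_le_rsqrt)
  qed
  ultimately show ?thesis by simp
qed



definition uF :: "('v \<Rightarrow> real) \<Rightarrow> ('v \<times> 'v \<Rightarrow> real) \<Rightarrow> ('v \<times> 'v \<Rightarrow> real) \<Rightarrow> 'v \<times> 'v \<Rightarrow> real \<Rightarrow> real" where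
  "uF V g b e s = flow_ik V (g e) (b e) (fst e) (snd e) s"
definition wF :: "('v \<Rightarrow> real) \<Rightarrow> ('v \<times> 'v \<Rightarrow> real) \<Rightarrow> ('v \<times> 'v \<Rightarrow> real) \<Rightarrow> 'v \<times> 'v \<Rightarrow> real \<Rightarrow> real" where
  "wF V g b e s = flow_ki V (g e) (b e) (fst e) (snd e) s"

lemma AY:
  fixes E :: "('v::finite \<times> 'v) set"
  assumes anti: "\<forall>i k. (i, k) \<in> E \<longrightarrow> (k, i) \<notin> E"
    and hf: "\<forall>e\<in>E. f e = u e (t e) \<and> f (snd e, fst e) = w e (t e)"
  shows "A_map E f $ v = Ysum u w E t v"
proof -
  define K1 where "K1 = {k. (v, k) \<in> E}"
  define K2 where "K2 = {k. (k, v) \<in> E}"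
  have "{k. adj E v k} = K1 \<union> K2" unfolding K1_def K2_def adj_def by auto
  moreover have "K1 \<inter> K2 = {}" using anti unfolding K1_def K2_def by auto
  ultimately have "A_map E f $ v = (\<Sum>k\<in>K1. f (v, k)) + (\<Sum>k\<in>K2. f (v, k))"
    unfolding A_map_def by (simp add: sum.union_disjoint)
  also have "(\<Sum>k\<in>K1. f (v, k)) = (\<Sum>e\<in>{e\<in>E. fst e = v}. u e (t e))"
  proof -
    have im: "{e\<in>E. fst e = v} = (\<lambda>k. (v, k)) ` K1" unfolding K1_def by force
    have "(\<Sum>e\<in>{e\<in>E. fst e = v}. u e (t e)) = (\<Sum>k\<in>K1. u (v, k) (t (v, k)))"
      unfolding im by (subst sum.reindex) (auto simp: inj_on_def)
    also have "\<dots> = (\<Sum>k\<in>K1. f (v, k))" using hf unfolding K1_def by (auto intro: sum.cong)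
    finally show ?thesis by simp
  qed
  also have "(\<Sum>k\<in>K2. f (v, k)) = (\<Sum>e\<in>{e\<in>E. snd e = v}. w e (t e))"
  proof -
    have im: "{e\<in>E. snd e = v} = (\<lambda>k. (k, v)) ` K2" unfolding K2_def by force
    have "(\<Sum>e\<in>{e\<in>E. snd e = v}. w e (t e)) = (\<Sum>k\<in>K2. w (k, v) (t (k, v)))"
      unfolding im by (subst sum.reindex) (auto simp: inj_on_def)
    also have "\<dots> = (\<Sum>k\<in>K2. f (v, k))"
    proof (rule sum.cong)
      fix k assume "k \<in> K2"
      then have "(k, v) \<in> E" unfolding K2_def by simp
      then show "w (k, v) (t (k, v)) = f (v, k)" using hf by (metis fst_conv snd_conv)
    qed simp
    finally show ?thesis by simp
  qed
  also have "(\<Sum>e\<in>{e\<in>E. fst e = v}. u e (t e)) + (\<Sum>e\<in>{e\<in>E. snd e = v}. w e (t e)) = Ysum u w E t v"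
    unfolding Ysum_def contrib_def sum.distrib
    by (simp add: sum.inter_filter)
  finally show ?thesis .
qed

lemma Ptheta_eq:
  fixes E :: "('v::finite \<times> 'v) set"
  assumes anti: "\<forall>i k. (i, k) \<in> E \<longrightarrow> (k, i) \<notin> E"
  shows "P_theta E V g b lo hi
     = (\<lambda>t. \<chi> v. Ysum (uF V g b) (wF V g b) E t v) ` {t. \<forall>e\<in>E. lo e \<le> t e \<and> t e \<le> hi e}"
proof
  show "P_theta E V g b lo hi \<subseteq> (\<lambda>t. \<chi> v. Ysum (uF V g b) (wF V g b) E t v) ` {t. \<forall>e\<in>E. lo e \<le> t e \<and> t e \<le> hi e}"
  proof
    fix x assume "x \<in> P_theta E V g b lo hi"
    then obtain f where f: "f \<in> F_theta E V g b lo hi" and x: "x = A_map E f"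
      unfolding P_theta_def by auto
    have "\<forall>e\<in>E. \<exists>s. lo e \<le> s \<and> s \<le> hi e \<and> f e = uF V g b e s \<and> f (snd e, fst e) = wF V g b e s"
      using f unfolding F_theta_def uF_def wF_def by fastforce
    then obtain t where t: "\<forall>e\<in>E. lo e \<le> t e \<and> t e \<le> hi e \<and> f e = uF V g b e (t e)
          \<and> f (snd e, fst e) = wF V g b e (t e)"
      by metis
    have "x = (\<chi> v. Ysum (uF V g b) (wF V g b) E t v)"
      unfolding x vec_eq_iff using AY[where f=f and u="uF V g b" and t=t and w="wF V g b", OF anti] t by simp
    then show "x \<in> (\<lambda>t. \<chi> v. Ysum (uF V g b) (wF V g b) E t v) ` {t. \<forall>e\<in>E. lo e \<le> t e \<and> t e \<le> hi e}"
      using t by blast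
  qed
next
  show "(\<lambda>t. \<chi> v. Ysum (uF V g b) (wF V g b) E t v) ` {t. \<forall>e\<in>E. lo e \<le> t e \<and> t e \<le> hi e} \<subseteq> P_theta E V g b lo hi"
  proof
    fix x assume "x \<in> (\<lambda>t. \<chi> v. Ysum (uF V g b) (wF V g b) E t v) ` {t. \<forall>e\<in>E. lo e \<le> t e \<and> t e \<le> hi e}"
    then obtain t where t: "\<forall>e\<in>E. lo e \<le> t e \<and> t e \<le> hi e"
      and x: "x = (\<chi> v. Ysum (uF V g b) (wF V g b) E t v)" by auto
    define f where "f = (\<lambda>(i, k). if (i, k) \<in> E then uF V g b (i, k) (t (i, k))
        else if (k, i) \<in> E then wF V g b (k, i) (t (k, i)) else 0)"
    have hf: "\<forall>e\<in>E. f e = uF V g b e (t e) \<and> f (snd e, fst e) = wF V g b e (t e)"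
      using anti unfolding f_def by auto
    have "f \<in> F_theta E V g b lo hi"
      unfolding F_theta_def
    proof (intro CollectI conjI allI impI ballI)
      fix e assume e: "e \<in> E"
      obtain i k where ik: "e = (i, k)" by fastforce
      show "case e of (i, k) \<Rightarrow> \<exists>t\<in>{lo (i, k)..hi (i, k)}.
            f (i, k) = flow_ik V (g (i, k)) (b (i, k)) i k t \<and> f (k, i) = flow_ki V (g (i, k)) (b (i, k)) i k t"
        using hf e t unfolding ik uF_def wF_def by fastforce
    next
      fix i k assume "\<not> adj E i k"
      then show "f (i, k) = 0" unfolding f_def adj_def by auto
    qed
    moreover have "A_map E f = x"
      unfolding x vec_eq_iff using AY[where f=f and u="uF V g b" and t=t and w="wF V g b", OF anti hf] by simp
    ultimately show "x \<in> P_theta E V g b lo hi" unfolding P_theta_def by blast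
  qed
qed

lemma pareto_eq:
  assumes sub: "P \<subseteq> C" and dom: "\<forall>x\<in>C. \<exists>y\<in>P. \<forall>i. y $ i \<le> x $ i"
  shows "pareto P = pareto C"
proof
  show "pareto P \<subseteq> pareto C"
  proof
    fix x assume x: "x \<in> pareto P"
    have "\<not> (\<exists>z\<in>C. (\<forall>i. z $ i \<le> x $ i) \<and> (\<exists>i. z $ i < x $ i))"
    proof
      assume "\<exists>z\<in>C. (\<forall>i. z $ i \<le> x $ i) \<and> (\<exists>i. z $ i < x $ i)"
      then obtain z j where z: "z \<in> C" "\<forall>i. z $ i \<le> x $ i" "z $ j < x $ j" by auto
      then obtain y where y: "y \<in> P" "\<forall>i. y $ i \<le> z $ i" using dom by auto
      then have "\<forall>i. y $ i \<le> x $ i" "y $ j < x $ j" using z by (auto intro: order_trans le_less_trans)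
      then show False using x y unfolding pareto_def by blast
    qed
    then show "x \<in> pareto C" using x sub unfolding pareto_def by auto
  qed
next
  show "pareto C \<subseteq> pareto P"
  proof
    fix x assume x: "x \<in> pareto C"
    then obtain y where y: "y \<in> P" "\<forall>i. y $ i \<le> x $ i" using dom unfolding pareto_def by auto
    have "\<not> (\<exists>i. y $ i < x $ i)" using x y sub unfolding pareto_def by auto
    then have "y = x" using y by (simp add: vec_eq_iff order.order_iff_strict)
    then show "x \<in> pareto P" using x y sub unfolding pareto_def by auto
  qed
qed

lemma flow_comb:
  fixes g b th tau t1 t2 :: real
  assumes V: "V i > 0" "V k > 0" and g: "g \<ge> 0" and th: "0 \<le> th" "th \<le> 1"
    and s: "sin tau = th * sin t1 + (1 - th) * sin t2"
    and c: "th * cos t1 + (1 - th) * cos t2 \<le> cos tau"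
  shows "flow_ik V g b i k tau \<le> th * flow_ik V g b i k t1 + (1 - th) * flow_ik V g b i k t2
     \<and> flow_ki V g b i k tau \<le> th * flow_ki V g b i k t1 + (1 - th) * flow_ki V g b i k t2"
proof -
  have m: "V i * V k * g * (th * cos t1 + (1 - th) * cos t2) \<le> V i * V k * g * cos tau"
    using V g c by (intro mult_left_mono) auto
  have e1: "th * flow_ik V g b i k t1 + (1 - th) * flow_ik V g b i k t2
      = (V i)\<^sup>2 * g + V i * V k * b * (th * sin t1 + (1 - th) * sin t2) - V i * V k * g * (th * cos t1 + (1 - th) * cos t2)"
    unfolding flow_ik_def by (simp add: algebra_simps)
  have e2: "th * flow_ki V g b i k t1 + (1 - th) * flow_ki V g b i k t2
      = (V k)\<^sup>2 * g - V i * V k * b * (th * sin t1 + (1 - th) * sin t2) - V i * V k * g * (th * cos t1 + (1 - th) * cos t2)"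
    unfolding flow_ki_def by (simp add: algebra_simps)
  show ?thesis unfolding e1 e2 using m unfolding flow_ik_def flow_ki_def s by simp
qed

lemma contrib_comb:
  assumes "u e tau \<le> th * u e t1 + (1 - th) * u e t2" "w e tau \<le> th * w e t1 + (1 - th) * w e t2"
  shows "contrib u w e tau v \<le> th * contrib u w e t1 v + (1 - th) * contrib u w e t2 v"
  using assms unfolding contrib_def by (auto simp: algebra_simps)



theorem lemma3:
  fixes E :: "('v::finite \<times> 'v) set"
    and V :: "'v \<Rightarrow> real"
    and g b thlo thhi :: "'v \<times> 'v \<Rightarrow> real"
    and Plo Phi :: "'v \<Rightarrow> real"
  assumes tree: "is_tree E"
    and V_pos: "\<forall>i. V i > 0"
    and gb_nonneg: "\<forall>e \<in> E. g e \<ge> 0 \<and> b e \<ge> 0"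
    and lo_range: "\<forall>e \<in> E. - pi \<le> thlo e \<and> thlo e \<le> 0"
    and hi_range: "\<forall>e \<in> E. 0 \<le> thhi e \<and> thhi e \<le> pi"
    and angle: "\<forall>e \<in> E. - angle_bound (g e) (b e) < thlo e \<and> thlo e \<le> thhi e
                        \<and> thhi e < angle_bound (g e) (b e)"
    and nonempty: "P_theta E V g b thlo thhi \<inter> P_P Plo Phi \<noteq> {}"
  shows "pareto (P_theta E V g b thlo thhi \<inter> P_P Plo Phi)
       = pareto (convex hull (P_theta E V g b thlo thhi) \<inter> P_P Plo Phi)"
proof -
  have noloop: "\<forall>i. (i, i) \<notin> E" and anti: "\<forall>i k. (i, k) \<in> E \<longrightarrow> (k, i) \<notin> E"
    and conn0: "\<forall>i k. (adj E)\<^sup>*\<^sup>* i k" and card0: "card E = CARD('v) - 1"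
    using tree unfolding is_tree_def by auto
  have ends: "\<forall>e\<in>E. fst e \<in> (UNIV::'v set) \<and> snd e \<in> UNIV \<and> fst e \<noteq> snd e"
    using noloop by (metis UNIV_I prod.collapse)
  have conn: "\<forall>i\<in>(UNIV::'v set). \<forall>k\<in>UNIV. (adj E)\<^sup>*\<^sup>* i k" using conn0 by simp
  have "CARD('v) > 0" by (simp add: card_gt_0_iff)
  then have card: "card E + 1 = card (UNIV::'v set)" using card0 by simp
  define u where "u = uF V g b"
  define w where "w = wF V g b"
  define R where "R = {t. \<forall>e\<in>E. thlo e \<le> t e \<and> t e \<le> thhi e}"
  define \<Psi> where "\<Psi> t = (\<chi> v. Ysum u w E t v)" for t
  have PT: "P_theta E V g b thlo thhi = \<Psi> ` R"
    unfolding \<Psi>_def R_def u_def w_def by (rule Ptheta_eq[OF anti])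
  have cont: "\<forall>e\<in>E. continuous_on UNIV (u e) \<and> continuous_on UNIV (w e)"
    unfolding u_def w_def uF_def wF_def flow_ik_def flow_ki_def by (auto intro!: continuous_intros)
  have mono: "\<forall>e\<in>E. \<forall>s t. thlo e \<le> s \<longrightarrow> s \<le> t \<longrightarrow> t \<le> thhi e \<longrightarrow> u e s \<le> u e t \<and> w e t \<le> w e s"
    unfolding u_def w_def uF_def wF_def
  proof (intro ballI allI impI)
    fix e s t assume e: "e \<in> E" and st: "thlo e \<le> s" "s \<le> t" "t \<le> thhi e"
    show "flow_ik V (g e) (b e) (fst e) (snd e) s \<le> flow_ik V (g e) (b e) (fst e) (snd e) t \<and>
          flow_ki V (g e) (b e) (fst e) (snd e) t \<le> flow_ki V (g e) (b e) (fst e) (snd e) s"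
    proof -
      have a: "- angle_bound (g e) (b e) < thlo e" "thhi e < angle_bound (g e) (b e)" using angle e by auto
      have gb: "0 \<le> g e" "0 \<le> b e" using gb_nonneg e by auto
      show ?thesis by (rule flow_mono[of V "fst e" "snd e", OF V_pos[rule_format] V_pos[rule_format] gb a st])
    qed
  qed
  have bnd: "- (pi/2) < thlo e \<and> thhi e < pi/2" if "e \<in> E" for e
    using angle that angle_bound_le[of "g e" "b e"] gb_nonneg by force
  define D where "D = {x. \<exists>t\<in>R. \<forall>v. Ysum u w E t v \<le> x $ v}"
  have convD: "convex D"
  proof (rule convexI)
    fix x y :: "real ^ 'v" and a c :: real
    assume x: "x \<in> D" and y: "y \<in> D" and a: "0 \<le> a" and c: "0 \<le> c" and ac: "a + c = 1"
    obtain t1 where t1: "t1 \<in> R" "\<forall>v. Ysum u w E t1 v \<le> x $ v" using x unfolding D_def by auto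
    obtain t2 where t2: "t2 \<in> R" "\<forall>v. Ysum u w E t2 v \<le> y $ v" using y unfolding D_def by auto
    define tau where "tau e = arcsin (a * sin (t1 e) + (1 - a) * sin (t2 e))" for e
    have arc: "thlo e \<le> tau e \<and> tau e \<le> thhi e \<and> sin (tau e) = a * sin (t1 e) + (1 - a) * sin (t2 e)
       \<and> a * cos (t1 e) + (1 - a) * cos (t2 e) \<le> cos (tau e)" if e: "e \<in> E" for e
      unfolding tau_def using arc_comb[of "thlo e" "thhi e" "t1 e" "t2 e" a] bnd[OF e] t1 t2 e a ac c
      unfolding R_def by auto
    have tauR: "tau \<in> R" using arc unfolding R_def by auto
    have ce: "contrib u w e (tau e) v \<le> a * contrib u w e (t1 e) v + (1 - a) * contrib u w e (t2 e) v"
      if e: "e \<in> E" for e v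
    proof (rule contrib_comb)
      have "flow_ik V (g e) (b e) (fst e) (snd e) (tau e) \<le> a * flow_ik V (g e) (b e) (fst e) (snd e) (t1 e)
             + (1 - a) * flow_ik V (g e) (b e) (fst e) (snd e) (t2 e)
         \<and> flow_ki V (g e) (b e) (fst e) (snd e) (tau e) \<le> a * flow_ki V (g e) (b e) (fst e) (snd e) (t1 e)
             + (1 - a) * flow_ki V (g e) (b e) (fst e) (snd e) (t2 e)"
        using flow_comb[of V "fst e" "snd e" "g e" a "tau e" "t1 e" "t2 e" "b e"] V_pos gb_nonneg e arc[OF e]
          a ac c by auto
      then show "u e (tau e) \<le> a * u e (t1 e) + (1 - a) * u e (t2 e)"
        "w e (tau e) \<le> a * w e (t1 e) + (1 - a) * w e (t2 e)"
        unfolding u_def w_def uF_def wF_def by auto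
    qed
    have "\<forall>v. Ysum u w E tau v \<le> (a *\<^sub>R x + c *\<^sub>R y) $ v"
    proof
      fix v
      have "Ysum u w E tau v \<le> (\<Sum>e\<in>E. a * contrib u w e (t1 e) v + (1 - a) * contrib u w e (t2 e) v)"
        unfolding Ysum_def using ce by (intro sum_mono) auto
      also have "\<dots> = a * Ysum u w E t1 v + (1 - a) * Ysum u w E t2 v"
        unfolding Ysum_def by (simp add: sum.distrib sum_distrib_left)
      also have "\<dots> \<le> a * x $ v + (1 - a) * y $ v"
        using t1 t2 a ac c by (intro add_mono mult_left_mono) auto
      also have "\<dots> = (a *\<^sub>R x + c *\<^sub>R y) $ v" using ac by simp
      finally show "Ysum u w E tau v \<le> (a *\<^sub>R x + c *\<^sub>R y) $ v" .
    qed
    then show "a *\<^sub>R x + c *\<^sub>R y \<in> D" using tauR unfolding D_def by auto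
  qed
  have "\<Psi> ` R \<subseteq> D" unfolding D_def \<Psi>_def by auto
  then have hullD: "convex hull (\<Psi> ` R) \<subseteq> D" using convD by (rule hull_minimal)
  from nonempty obtain h where h: "h \<in> \<Psi> ` R" "h \<in> P_P Plo Phi" unfolding PT by blast
  from h(1) obtain th where th0: "th \<in> R" "h = \<Psi> th" by blast
  have th: "th \<in> R" "\<forall>v. Plo v \<le> Ysum u w E th v"
    using th0 h(2) unfolding P_P_def \<Psi>_def by auto
  have dom: "\<forall>x\<in>convex hull (\<Psi> ` R) \<inter> P_P Plo Phi. \<exists>y\<in>\<Psi> ` R \<inter> P_P Plo Phi. \<forall>i. y $ i \<le> x $ i"
  proof
    fix x assume x: "x \<in> convex hull (\<Psi> ` R) \<inter> P_P Plo Phi"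
    then obtain tx where tx: "tx \<in> R" "\<forall>v. Ysum u w E tx v \<le> x $ v" using hullD unfolding D_def by auto
    have xb: "\<forall>v. Plo v \<le> x $ v \<and> x $ v \<le> Phi v" using x unfolding P_P_def by auto
    obtain t where t: "\<forall>e\<in>E. thlo e \<le> t e \<and> t e \<le> thhi e"
      "\<forall>v\<in>UNIV. Plo v \<le> Ysum u w E t v \<and> Ysum u w E t v \<le> x $ v"
      using GL[OF ends conn card cont mono, of th tx Plo "\<lambda>v. x $ v"] th tx xb unfolding R_def by auto
    have "\<Psi> t \<in> \<Psi> ` R" using t unfolding R_def by auto
    moreover have "\<Psi> t \<in> P_P Plo Phi" using t xb unfolding P_P_def \<Psi>_def by (auto intro: order_trans)
    moreover have "\<forall>i. \<Psi> t $ i \<le> x $ i" using t unfolding \<Psi>_def by auto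
    ultimately show "\<exists>y\<in>\<Psi> ` R \<inter> P_P Plo Phi. \<forall>i. y $ i \<le> x $ i" by blast
  qed
  have sub: "\<Psi> ` R \<inter> P_P Plo Phi \<subseteq> convex hull (\<Psi> ` R) \<inter> P_P Plo Phi"
    using hull_subset[of "\<Psi> ` R" convex] by (intro Int_mono) auto
  show ?thesis unfolding PT by (rule pareto_eq[OF sub dom])
qed

end
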